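(* Let $\psi:\mathbb{N}\to\mathbb{R}_{\ge0}$ satisfy $\lim_{q\to\infty}\psi(q)/q=0$, fix $\delta>0$, and suppose $\psi(q)\ge\delta$ for every $q\in\mathbb{N}$ with $\psi(q)\ne0$. Let $(\mathcal{I}_q)_{q\in\mathbb{N}}$ be any sequence with $\mathcal{I}_q\subseteq\mathbb{Z}_q$. Then the following are equivalent: (a) there exists $\gamma\in\mathbb{R}$ such that $\mu(\limsup_{q\to\infty}E_q^{\mathcal{I}}(\gamma,\psi))=1$; (b) for every $\gamma\in\mathbb{R}$, $\mu(\limsup_{q\to\infty}E_q^{\mathcal{I}}(\gamma,\psi))=1$.
   Context: $\mu$ is Lebesgue measure, $\mathbb{Z}_q=\{0,\dots,q-1\}$, and $\|y\|$ denotes the distance from $y\in\mathbb{R}$ to the nearest integer. For $\gamma\in\mathbb{R}$, $$E_q^{\mathcal{I}}(\gamma,\psi):=\Big\{x\in[0,1]:\Big\|x-\frac{a+\gamma}{q}\Big\|\le\frac{\psi(q)}{q}\text{ for some }a\in\mathcal{I}_q\Big\}.$$ *)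

theory Defs
  imports "HOL-Analysis.Analysis" "HOL-Library.Liminf_Limsup"
begin

definition dist_nint :: "real \<Rightarrow> real" where
  "dist_nint y = (INF k\<in>(\<int>::real set). \<bar>y - k\<bar>)"

definition E_set :: "(nat \<Rightarrow> nat set) \<Rightarrow> real \<Rightarrow> (nat \<Rightarrow> real) \<Rightarrow> nat \<Rightarrow> real set" where
  "E_set I \<gamma> \<psi> q = {x \<in> {0..1}. \<exists>a\<in>I q.
      dist_nint (x - (real a + \<gamma>) / real q) \<le> \<psi> q / real q}"

end

theory Submission imports Defs begin

lemma dist_nint_eq: "dist_nint y = \<bar>y - of_int (round y)\<bar>"
proof -
  have "(INF k\<in>(\<int>::real set). \<bar>y - k\<bar>) = \<bar>y - of_int (round y)\<bar>"
  proof (rule antisym)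
    show "(INF k\<in>(\<int>::real set). \<bar>y - k\<bar>) \<le> \<bar>y - of_int (round y)\<bar>"
      by (rule cINF_lower) (auto intro: bdd_belowI[of _ 0])
    show "\<bar>y - of_int (round y)\<bar> \<le> (INF k\<in>(\<int>::real set). \<bar>y - k\<bar>)"
      by (rule cINF_greatest) (auto elim!: Ints_cases intro: round_diff_minimal)
  qed
  then show ?thesis by (simp add: dist_nint_def)
qed

lemma dist_nint_le: "dist_nint y \<le> r \<longleftrightarrow> (\<exists>k::int. \<bar>y - of_int k\<bar> \<le> r)"
  using round_diff_minimal[of y] by (auto simp: dist_nint_eq intro: order_trans)

lemma E_set_eq: "E_set I \<gamma> \<psi> q = {0..1} \<inter> (\<Union>a\<in>I q. \<Union>k::int. cball ((real a + \<gamma>) / real q + of_int k) (\<psi> q / real q))"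
  by (auto simp: E_set_def dist_nint_le dist_real_def algebra_simps; metis abs_minus_commute)

lemma E_set_sets: "E_set I \<gamma> \<psi> q \<in> sets lebesgue"
  unfolding E_set_eq
  by (intro sets.Int sets.countable_UN'' borel_closed) auto

lemma limsup_mem: "x \<in> limsup (A :: nat \<Rightarrow> 'a set) \<longleftrightarrow> (\<forall>n. \<exists>m\<ge>n. x \<in> A m)"
  by (auto simp: limsup_INF_SUP)

lemma limsup_sets:
  assumes "\<And>n. A n \<in> sets M" shows "limsup A \<in> sets M"
  unfolding limsup_INF_SUP using assms by measurable


lemma countable_negligible: "countable (P::real set) \<Longrightarrow> negligible P"
proof -
  assume "countable P"
  then have "negligible (\<Union>((\<lambda>p. {p}) ` P))"
    by (intro negligible_countable_Union) auto
  then show ?thesis by simp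
qed

lemma key_neg:
  fixes \<psi> :: "nat \<Rightarrow> real" and \<delta> :: real and I :: "nat \<Rightarrow> nat set" and \<gamma> t :: real and n :: nat
  assumes lim: "(\<lambda>q. \<psi> q / real q) \<longlonglongrightarrow> 0"
    and delta_pos: "\<delta> > 0"
    and delta: "\<And>q. q \<ge> 1 \<Longrightarrow> \<psi> q \<noteq> 0 \<Longrightarrow> \<psi> q \<ge> \<delta>"
    and ht: "\<bar>t\<bar> \<le> \<delta> / 2"
  assumes A_def: "A = limsup (\<lambda>q. E_set I \<gamma> \<psi> q)"
    and P_def: "P = (\<lambda>(q,a,k). (real a + \<gamma>) / real q + real_of_int k) ` (UNIV :: (nat \<times> nat \<times> int) set)"
    and S_def: "S = {x \<in> {0<..<1}. x \<in> A \<and> x \<notin> P \<and> (\<forall>q\<ge>n. x \<notin> E_set I (\<gamma>+t) \<psi> q)}"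
  shows "negligible S"
proof -
  have Pc: "countable P" unfolding P_def by simp
  have Ssets: "S \<in> sets lebesgue"
  proof -
    have "S = ({0<..<1} \<inter> A) - P - (\<Union>q\<in>{n..}. E_set I (\<gamma>+t) \<psi> q)"
      unfolding S_def by auto
    moreover have "A \<in> sets lebesgue" unfolding A_def by (intro limsup_sets E_set_sets)
    moreover have "P \<in> sets lebesgue" using countable_negligible[OF Pc] by (rule negligible_imp_sets)
    ultimately show ?thesis
      by (simp add: sets.Diff sets.Int sets.countable_UN'' E_set_sets)
  qed
  have SL: "S \<in> lmeasurable"
    by (rule bounded_set_imp_lmeasurable[OF _ Ssets])
       (rule bounded_subset[of "{0..1}"], auto simp: S_def)
  define ctr where "ctr = (\<lambda>(q::nat,a::nat,k::int). (real a + \<gamma>) / real q + real_of_int k)"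
  define rad where "rad = (\<lambda>(q::nat,a::nat,k::int). \<psi> q / real q)"
  have le_eps: "measure lebesgue S \<le> \<epsilon>" if "\<epsilon> > 0" for \<epsilon>
  proof -
    obtain U where U: "open U" "S \<subseteq> U" "U - S \<in> lmeasurable" "emeasure lebesgue (U - S) < ennreal \<epsilon>"
      using sets_lebesgue_outer_open[OF Ssets \<open>\<epsilon> > 0\<close>] by blast
    have UL: "U \<in> lmeasurable" using fmeasurable_Diff_D[OF U(3) SL U(2)] .
    have "measure lebesgue (U - S) < \<epsilon>"
      using U(4) emeasure_eq_measure2[OF U(3)] \<open>\<epsilon> > 0\<close> by (simp add: ennreal_less_iff)
    then have mU: "measure lebesgue U \<le> measure lebesgue S + \<epsilon>"
      using measurable_measure_Diff[OF UL _ U(2)] SL by auto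
    define K where "K = {(q,a,k). q \<ge> n \<and> q \<ge> 1 \<and> a \<in> I q \<and> \<psi> q \<noteq> 0 \<and> cball (ctr (q,a,k)) (rad (q,a,k)) \<subseteq> U}"
    have rpos: "0 < rad i" if "i \<in> K" for i
    proof -
      obtain q a k where i: "i = (q,a,k)" by (cases i) auto
      have "q \<ge> 1" "\<psi> q \<noteq> 0" using that by (auto simp: K_def i)
      then have "\<psi> q \<ge> \<delta>" using delta by auto
      then show ?thesis using delta_pos \<open>q \<ge> 1\<close> by (simp add: rad_def i)
    qed
    have cover: "\<exists>i. i \<in> K \<and> x \<in> cball (ctr i) (rad i) \<and> rad i < d" if "x \<in> S" "0 < d" for x d
    proof -
      obtain e where e: "e > 0" "ball x e \<subseteq> U" using U(1,2) \<open>x \<in> S\<close> open_contains_ball by blast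
      define d' where "d' = min d (e/2)"
      have "d' > 0" using e \<open>d > 0\<close> by (simp add: d'_def)
      then obtain N where N: "\<And>q. q \<ge> N \<Longrightarrow> \<bar>\<psi> q / real q\<bar> < d'"
        using lim[unfolded LIMSEQ_def] by (auto simp: dist_real_def)
      have "x \<in> A" "x \<notin> P" using \<open>x \<in> S\<close> by (auto simp: S_def)
      then obtain m where m: "m \<ge> max n (max N 1)" "x \<in> E_set I \<gamma> \<psi> m"
        unfolding A_def limsup_mem by blast
      then obtain a k where a: "a \<in> I m" and xk: "x \<in> cball ((real a + \<gamma>) / real m + real_of_int k) (\<psi> m / real m)"
        unfolding E_set_eq by blast
      have xne: "x \<noteq> (real a + \<gamma>) / real m + real_of_int k"
        using \<open>x \<notin> P\<close> unfolding P_def by (auto simp: image_iff)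
      then have "\<psi> m / real m > 0" using xk
        by (smt (verit, ccfv_threshold) dist_not_less_zero dist_pos_lt mem_cball)
      then have psi0: "\<psi> m \<noteq> 0" by auto
      have "N \<le> m" using m(1) by simp
      then have small: "\<psi> m / real m < d'" using N[of m] abs_ge_self[of "\<psi> m / real m"] by linarith
      have "cball ((real a + \<gamma>) / real m + real_of_int k) (\<psi> m / real m) \<subseteq> ball x e"
      proof
        fix y assume yc: "y \<in> cball ((real a + \<gamma>) / real m + real_of_int k) (\<psi> m / real m)"
        have "dist ((real a + \<gamma>) / real m + real_of_int k) x \<le> \<psi> m / real m"
             "dist ((real a + \<gamma>) / real m + real_of_int k) y \<le> \<psi> m / real m"
          using xk yc by auto
        moreover have "\<psi> m / real m < e / 2" using small by (simp add: d'_def)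
        ultimately show "y \<in> ball x e"
          unfolding mem_ball dist_real_def by linarith
      qed
      then have "(m,a,k) \<in> K" using e m(1) a psi0 by (auto simp: K_def ctr_def rad_def)
      moreover have "rad (m,a,k) < d" using small by (simp add: rad_def d'_def)
      ultimately show ?thesis using xk by (auto simp: ctr_def rad_def)
    qed
    obtain C where C: "countable C" "C \<subseteq> K"
      "pairwise (\<lambda>i j. disjnt (cball (ctr i) (rad i)) (cball (ctr j) (rad j))) C"
      "negligible (S - (\<Union>i\<in>C. cball (ctr i) (rad i)))"
      using Vitali_covering_theorem_cballs[of K rad S ctr] rpos cover by blast
    define W where "W = (\<Union>i\<in>C. cball (ctr i) (rad i))"
    define H where "H = (\<Union>i\<in>C. cball (ctr i) (rad i / 2))"
    have WU: "W \<subseteq> U" using C(2) by (auto simp: W_def K_def)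
    have sub: "cball (ctr i) (rad i / 2) \<subseteq> cball (ctr i) (rad i)" if "i \<in> C" for i
      using rpos[of i] that C(2) by (intro subset_cball) auto
    have HW: "H \<subseteq> W" using sub unfolding W_def H_def by blast
    have Wsets: "W \<in> sets lebesgue" unfolding W_def using C(1) by (intro sets.countable_UN'') auto
    have Hsets: "H \<in> sets lebesgue" unfolding H_def using C(1) by (intro sets.countable_UN'') auto
    have WL: "W \<in> lmeasurable" using fmeasurableI2[OF UL WU Wsets] .
    have HL: "H \<in> lmeasurable" using fmeasurableI2[OF WL HW Hsets] .
    have disjW: "disjoint_family_on (\<lambda>i. cball (ctr i) (rad i)) C"
      using C(3) by (auto simp: disjoint_family_on_def pairwise_def disjnt_def)
    have disjH: "disjoint_family_on (\<lambda>i. cball (ctr i) (rad i / 2)) C"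
    proof -
      show ?thesis using sub using disjW by (fastforce simp: disjoint_family_on_def)
    qed
    have "emeasure lebesgue W = (\<integral>\<^sup>+i. emeasure lebesgue (cball (ctr i) (rad i)) \<partial>count_space C)"
      unfolding W_def by (rule emeasure_UN_countable[OF _ C(1) disjW]) auto
    also have "\<dots> = (\<integral>\<^sup>+i. 2 * ennreal (rad i) \<partial>count_space C)"
      apply (rule nn_integral_cong)
      using rpos C(2) by (auto simp: cball_eq_atLeastAtMost ennreal_mult' less_imp_le)
    also have "\<dots> = 2 * (\<integral>\<^sup>+i. ennreal (rad i) \<partial>count_space C)"
      by (rule nn_integral_cmult) auto
    also have "(\<integral>\<^sup>+i. ennreal (rad i) \<partial>count_space C) = (\<integral>\<^sup>+i. emeasure lebesgue (cball (ctr i) (rad i / 2)) \<partial>count_space C)"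
      apply (rule nn_integral_cong)
      using rpos C(2) by (auto simp: cball_eq_atLeastAtMost less_imp_le)
    also have "\<dots> = emeasure lebesgue H"
      unfolding H_def by (rule emeasure_UN_countable[OF _ C(1) disjH, symmetric]) auto
    finally have "emeasure lebesgue W = 2 * emeasure lebesgue H" .
    then have mWH: "measure lebesgue W = 2 * measure lebesgue H"
      using emeasure_eq_measure2[OF WL] emeasure_eq_measure2[OF HL]
      by (metis ennreal_mult'' ennreal_inj measure_nonneg zero_le_numeral mult_nonneg_nonneg ennreal_numeral)
    have SH: "S \<inter> H = {}"
    proof (rule ccontr)
      assume "S \<inter> H \<noteq> {}"
      then obtain y i where y: "y \<in> S" "i \<in> C" "y \<in> cball (ctr i) (rad i / 2)" unfolding H_def by blast
      obtain q a k where i: "i = (q,a,k)" by (cases i) auto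
      have iK: "q \<ge> n" "q \<ge> 1" "a \<in> I q" "\<psi> q \<noteq> 0" using y(2) C(2) by (auto simp: K_def i)
      have "\<psi> q \<ge> \<delta>" using delta iK by auto
      have qpos: "real q > 0" using iK by auto
      have d1: "\<bar>y - ((real a + \<gamma>) / real q + real_of_int k)\<bar> \<le> \<psi> q / real q / 2"
        using y(3) by (simp add: i ctr_def rad_def dist_real_def abs_minus_commute)
      have "\<bar>t / real q\<bar> \<le> \<delta> / 2 / real q"
        using ht qpos by (simp add: abs_divide divide_right_mono del: divide_divide_eq_left)
      also have "\<dots> \<le> \<psi> q / real q / 2"
        using \<open>\<psi> q \<ge> \<delta>\<close> qpos by (simp add: field_simps)
      finally have d2: "\<bar>t / real q\<bar> \<le> \<psi> q / real q / 2" .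
      have eq: "(real a + (\<gamma> + t)) / real q + real_of_int k = ((real a + \<gamma>) / real q + real_of_int k) + t / real q"
        by (simp add: add_divide_distrib)
      have "\<bar>y - ((real a + (\<gamma> + t)) / real q + real_of_int k)\<bar> \<le> \<psi> q / real q"
      proof -
        have L: "\<And>y c u r::real. \<bar>y - c\<bar> \<le> r/2 \<Longrightarrow> \<bar>u\<bar> \<le> r/2 \<Longrightarrow> \<bar>y - (c+u)\<bar> \<le> r" by arith
        show ?thesis unfolding eq by (rule L[OF d1 d2])
      qed
      then have "y \<in> E_set I (\<gamma>+t) \<psi> q"
        unfolding E_set_eq using y(1) iK(3)
        by (auto simp: S_def dist_real_def abs_minus_commute)
      then show False using y(1) iK(1) by (auto simp: S_def)
    qed
    have "S \<subseteq> (S - W) \<union> (W - H)" using SH by auto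
    then have "measure lebesgue S \<le> measure lebesgue ((S - W) \<union> (W - H))"
      by (intro measure_mono_fmeasurable) (auto intro!: fmeasurable.Un fmeasurable_Diff SL WL Ssets Wsets Hsets sets.Diff)
    also have "\<dots> \<le> measure lebesgue (S - W) + measure lebesgue (W - H)"
      by (intro measure_Un_le) (auto intro: Ssets Wsets Hsets sets.Diff)
    also have "measure lebesgue (S - W) = 0"
      using C(4) by (simp add: W_def negligible_iff_measure)
    also have "measure lebesgue (W - H) = measure lebesgue W - measure lebesgue H"
      by (rule measurable_measure_Diff[OF WL Hsets HW])
    also have "\<dots> = measure lebesgue W / 2" using mWH by simp
    also have "\<dots> \<le> measure lebesgue U / 2"
      using measure_mono_fmeasurable[OF WU Wsets UL] by simp
    finally show ?thesis using mU by simp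
  qed
  have "measure lebesgue S = 0"
    using le_eps by (meson measure_nonneg dense_le_bounded order_antisym not_le)
  then show ?thesis using SL by (simp add: negligible_iff_measure)
qed


lemma E_set_sub: "E_set I \<gamma> \<psi> q \<subseteq> {0..1}"
  by (auto simp: E_set_def)

lemma limsup_E_sub: "limsup (\<lambda>q. E_set I \<gamma> \<psi> q) \<subseteq> {0..1}"
proof
  fix x assume "x \<in> limsup (\<lambda>q. E_set I \<gamma> \<psi> q)"
  then obtain m where "x \<in> E_set I \<gamma> \<psi> m" unfolding limsup_mem by blast
  then show "x \<in> {0..1}" using E_set_sub by blast
qed

lemma step:
  fixes \<psi> :: "nat \<Rightarrow> real" and \<delta> :: real and I :: "nat \<Rightarrow> nat set" and \<gamma> t :: real
  assumes lim: "(\<lambda>q. \<psi> q / real q) \<longlonglongrightarrow> 0"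
    and delta_pos: "\<delta> > 0"
    and delta: "\<And>q. q \<ge> 1 \<Longrightarrow> \<psi> q \<noteq> 0 \<Longrightarrow> \<psi> q \<ge> \<delta>"
    and ht: "\<bar>t\<bar> \<le> \<delta> / 2"
    and h: "measure lebesgue (limsup (\<lambda>q. E_set I \<gamma> \<psi> q)) = 1"
  shows "measure lebesgue (limsup (\<lambda>q. E_set I (\<gamma>+t) \<psi> q)) = 1"
proof -
  define A where "A = limsup (\<lambda>q. E_set I \<gamma> \<psi> q)"
  define A' where "A' = limsup (\<lambda>q. E_set I (\<gamma>+t) \<psi> q)"
  define P where "P = (\<lambda>(q,a,k). (real a + \<gamma>) / real q + real_of_int k) ` (UNIV :: (nat \<times> nat \<times> int) set)"
  define S where "S = (\<lambda>n. {x \<in> {0<..<1}. x \<in> A \<and> x \<notin> P \<and> (\<forall>q\<ge>n. x \<notin> E_set I (\<gamma>+t) \<psi> q)})"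
  have Asets: "A \<in> sets lebesgue" unfolding A_def by (intro limsup_sets E_set_sets)
  have A'sets: "A' \<in> sets lebesgue" unfolding A'_def by (intro limsup_sets E_set_sets)
  have AL: "A \<subseteq> {0..1}" "A' \<subseteq> {0..1}" unfolding A_def A'_def by (rule limsup_E_sub)+
  have IL: "{0..1::real} \<in> lmeasurable" by simp
  have "measure lebesgue ({0..1} - A) = measure lebesgue {0..1::real} - measure lebesgue A"
    by (rule measurable_measure_Diff[OF IL Asets AL(1)])
  then have "measure lebesgue ({0..1} - A) = 0" using h by (simp add: A_def)
  then have negA: "negligible ({0..1} - A)"
    using fmeasurable_Diff[OF IL Asets] by (simp add: negligible_iff_measure)
  have negP: "negligible P" unfolding P_def by (intro countable_negligible) simp
  have negS: "negligible (S n)" for n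
    using key_neg[OF lim delta_pos delta ht A_def P_def refl, where n=n] unfolding S_def .
  have negU: "negligible (\<Union>(range S))"
    by (intro negligible_countable_Union) (auto intro: negS)
  have "{0..1} - A' \<subseteq> ({0..1} - A) \<union> P \<union> {0,1} \<union> \<Union>(range S)"
  proof
    fix x assume x: "x \<in> {0..1} - A'"
    then have "x \<notin> A'" by auto
    then have "\<not> (\<forall>n. \<exists>m\<ge>n. x \<in> E_set I (\<gamma>+t) \<psi> m)"
      unfolding A'_def limsup_mem .
    then obtain n where n: "\<forall>m\<ge>n. x \<notin> E_set I (\<gamma>+t) \<psi> m" by auto
    show "x \<in> ({0..1} - A) \<union> P \<union> {0,1} \<union> \<Union>(range S)"
    proof (cases "x \<in> A \<and> x \<notin> P \<and> x \<notin> {0,1}")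
      case True
      then have "x \<in> S n" using x n by (auto simp: S_def)
      then show ?thesis by blast
    qed (use x in auto)
  qed
  moreover have "negligible (({0..1} - A) \<union> P \<union> {0,1} \<union> \<Union>(range S))"
    using negA negP negU by (simp add: negligible_Un)
  ultimately have negA': "negligible ({0..1} - A')" by (metis negligible_subset)
  have "measure lebesgue ({0..1} - A') = measure lebesgue {0..1::real} - measure lebesgue A'"
    by (rule measurable_measure_Diff[OF IL A'sets AL(2)])
  moreover have "measure lebesgue ({0..1} - A') = 0" using negA' by (simp add: negligible_iff_measure)
  ultimately show ?thesis by (simp add: A'_def)
qed

theorem mainTheorem8:
  fixes \<psi> :: "nat \<Rightarrow> real" and \<delta> :: real and I :: "nat \<Rightarrow> nat set"
  assumes nonneg: "\<And>q. q \<ge> 1 \<Longrightarrow> \<psi> q \<ge> 0"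
    and lim: "(\<lambda>q. \<psi> q / real q) \<longlonglongrightarrow> 0"
    and delta_pos: "\<delta> > 0"
    and delta: "\<And>q. q \<ge> 1 \<Longrightarrow> \<psi> q \<noteq> 0 \<Longrightarrow> \<psi> q \<ge> \<delta>"
    and I_sub: "\<And>q. I q \<subseteq> {0..<q}"
  shows "(\<exists>\<gamma>::real. measure lebesgue (limsup (\<lambda>q. E_set I \<gamma> \<psi> q)) = 1)
     \<longleftrightarrow> (\<forall>\<gamma>::real. measure lebesgue (limsup (\<lambda>q. E_set I \<gamma> \<psi> q)) = 1)"
proof
  assume "\<exists>\<gamma>. measure lebesgue (limsup (\<lambda>q. E_set I \<gamma> \<psi> q)) = 1"
  then obtain \<gamma>0 where g0: "measure lebesgue (limsup (\<lambda>q. E_set I \<gamma>0 \<psi> q)) = 1" by blast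
  show "\<forall>\<gamma>. measure lebesgue (limsup (\<lambda>q. E_set I \<gamma> \<psi> q)) = 1"
  proof
    fix \<gamma> :: real
    define d where "d = \<gamma> - \<gamma>0"
    define N :: nat where "N = nat \<lceil>2 * \<bar>d\<bar> / \<delta>\<rceil> + 1"
    define t where "t = d / real N"
    have Npos: "real N > 0" by (simp add: N_def)
    have "2 * \<bar>d\<bar> / \<delta> \<le> real N"
      unfolding N_def by linarith
    then have "2 * \<bar>d\<bar> \<le> \<delta> * real N" using delta_pos by (simp add: field_simps)
    then have ht: "\<bar>t\<bar> \<le> \<delta> / 2" using Npos by (simp add: t_def abs_divide field_simps)
    have "measure lebesgue (limsup (\<lambda>q. E_set I (\<gamma>0 + real j * t) \<psi> q)) = 1" for j
    proof (induction j)
      case 0 then show ?case using g0 by simp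
    next
      case (Suc j)
      have "measure lebesgue (limsup (\<lambda>q. E_set I ((\<gamma>0 + real j * t) + t) \<psi> q)) = 1"
        by (rule step[OF lim delta_pos delta ht Suc])
      then show ?case by (simp add: algebra_simps)
    qed
    from this[of N] show "measure lebesgue (limsup (\<lambda>q. E_set I \<gamma> \<psi> q)) = 1"
      using Npos by (simp add: t_def d_def)
  qed
qed auto

end
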